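(* Let $\mathbb{K}$ be a field with algebraic closure $\overline{\mathbb{K}}$, $\nu$ a Krull valuation on $\mathbb{K}[x]$, $\mu$ a valuation on $\overline{\mathbb{K}}[x]$ extending $\nu$, $Q\in\mathbb{K}[x]$ a key polynomial for $\nu$ and $a\in\overline{\mathbb{K}}$ an optimizing root of $Q$. Then $\mu_{x-a}(f)=\nu_Q(f)$ for every $f\in\mathbb{K}[x]$.
   Context: Truncation: for a valuation $\nu$ on $L[x]$ ($L$ a field) and non-constant $q\in L[x]$, every $f$ has a unique $q$-expansion $f=f_0+f_1q+\dots+f_sq^s$ with $\deg f_i<\deg q$; set $\nu_q(f)=\min_i\nu(f_iq^i)$. Thus $\mu_{x-a}(\sum_i c_i(x-a)^i)=\min_i\{\mu(c_i)+i\mu(x-a)\}$ for $c_i\in\overline{\mathbb{K}}$. Key polynomials: for $\nu$ Krull and nonzero $f\in\mathbb{K}[x]$, with Hasse derivatives $\partial_bf=\sum_{i\ge b}\binom{i}{b}a_ix^{i-b}$ for $f=\sum a_ix^i$, set $\epsilon(f)=\max_{1\le b\le\deg f}(\nu(f)-\nu(\partial_bf))/b$ (in the divisible hull of the value group) if $\deg f>0$, and $\epsilon(f)=-\infty$ if $f$ is constant. A monic $Q$ is a key polynomial for $\nu$ if for all $f$, $\epsilon(f)\ge\epsilon(Q)$ implies $\deg f\ge\deg Q$. Optimizing root: for non-constant $f\in\mathbb{K}[x]$, $\delta(f)=\max\{\mu(x-c): c\in\overline{\mathbb{K}}, f(c)=0\}$, and a root $c$ of $f$ with $\mu(x-c)=\delta(f)$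 is an optimizing root. *)

theory Defs
  imports "HOL-Computational_Algebra.Polynomial" "HOL-Algebra.Algebraic_Closure_Type"
begin

text \<open>A Krull valuation on an integral domain R with values in an ordered abelian group:
  the value of 0 is the (implicit) symbol infinity, so the function is only constrained
  on nonzero elements; its values at 0 are irrelevant.\<close>
definition krull_valuation :: "('a::idom \<Rightarrow> 'g::linordered_ab_group_add) \<Rightarrow> bool" where
  "krull_valuation v \<longleftrightarrow>
     (\<forall>a b. a \<noteq> 0 \<longrightarrow> b \<noteq> 0 \<longrightarrow> v (a * b) = v a + v b) \<and>
     (\<forall>a b. a \<noteq> 0 \<longrightarrow> b \<noteq> 0 \<longrightarrow> a + b \<noteq> 0 \<longrightarrow> min (v a) (v b) \<le> v (a + b))"

definition gscale :: "nat \<Rightarrow> 'g::ab_group_add \<Rightarrow> 'g" where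
  "gscale n g = (\<Sum>_<n. g)"

definition hasse_deriv :: "nat \<Rightarrow> 'a::comm_ring_1 poly \<Rightarrow> 'a poly" where
  "hasse_deriv b f = (\<Sum>i\<in>{b..degree f}. monom (of_nat (i choose b) * coeff f i) (i - b))"

text \<open>eps_ge v f g  means  epsilon(f) >= epsilon(g), where
  epsilon(h) = max_{1<=b<=deg h} (v h - v (d_b h))/b  (in the divisible hull; terms with
  d_b h = 0 have value -infinity), and epsilon(h) = -infinity for constant h.
  Since the maxima are over finite sets, max_b A_b/b >= max_c B_c/c iff there is b with
  c*A_b >= b*B_c for all c; this avoids passing to the divisible hull.\<close>
definition eps_ge :: "('a::comm_ring_1 poly \<Rightarrow> 'g::linordered_ab_group_add) \<Rightarrow> 'a poly \<Rightarrow> 'a poly \<Rightarrow> bool" where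
  "eps_ge v f g \<longleftrightarrow>
     (if degree g = 0 then True
      else if degree f = 0 then False
      else (\<exists>b\<in>{1..degree f}. hasse_deriv b f \<noteq> 0 \<and>
              (\<forall>c\<in>{1..degree g}. hasse_deriv c g \<noteq> 0 \<longrightarrow>
                  gscale b (v g - v (hasse_deriv c g)) \<le> gscale c (v f - v (hasse_deriv b f)))))"

definition key_poly :: "('a::field poly \<Rightarrow> 'g::linordered_ab_group_add) \<Rightarrow> 'a poly \<Rightarrow> bool" where
  "key_poly v Q \<longleftrightarrow> lead_coeff Q = 1 \<and> (\<forall>f. f \<noteq> 0 \<longrightarrow> eps_ge v f Q \<longrightarrow> degree Q \<le> degree f)"

definition qexp_coeff :: "'a::field poly \<Rightarrow> 'a poly \<Rightarrow> nat \<Rightarrow> 'a poly" where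
  "qexp_coeff q f i = (f div q ^ i) mod q"

definition trunc_val :: "('a::field poly \<Rightarrow> 'g::linordered_ab_group_add) \<Rightarrow> 'a poly \<Rightarrow> 'a poly \<Rightarrow> 'g" where
  "trunc_val v q f = Min {v (qexp_coeff q f i * q ^ i) | i. i \<le> degree f \<and> qexp_coeff q f i \<noteq> 0}"

definition optimizing_root :: "('a::field alg_closure poly \<Rightarrow> 'g::linordered_ab_group_add)
     \<Rightarrow> 'a poly \<Rightarrow> 'a alg_closure \<Rightarrow> bool" where
  "optimizing_root mu f a \<longleftrightarrow> degree f > 0 \<and> poly (map_poly to_ac f) a = 0 \<and>
     (\<forall>c. poly (map_poly to_ac f) c = 0 \<longrightarrow> mu [:-c, 1:] \<le> mu [:-a, 1:])"

end

theory Submission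
  imports Defs
begin



section \<open>Valuation basics\<close>

definition geqv :: "('a::idom \<Rightarrow> 'g::linordered_ab_group_add) \<Rightarrow> 'a \<Rightarrow> 'g \<Rightarrow> bool" where
  "geqv v x t \<longleftrightarrow> x = 0 \<or> t \<le> v x"
definition gtv :: "('a::idom \<Rightarrow> 'g::linordered_ab_group_add) \<Rightarrow> 'a \<Rightarrow> 'g \<Rightarrow> bool" where
  "gtv v x t \<longleftrightarrow> x = 0 \<or> t < v x"

lemma kv_mult: "krull_valuation v \<Longrightarrow> a \<noteq> 0 \<Longrightarrow> b \<noteq> 0 \<Longrightarrow> v (a * b) = v a + v b"
  by (simp add: krull_valuation_def)
lemma kv_add: "krull_valuation v \<Longrightarrow> a \<noteq> 0 \<Longrightarrow> b \<noteq> 0 \<Longrightarrow> a + b \<noteq> 0 \<Longrightarrow> min (v a) (v b) \<le> v (a + b)"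
  by (simp add: krull_valuation_def)

lemma kv_one: assumes "krull_valuation v" shows "v 1 = 0"
proof -
  have "v (1*1) = v 1 + v 1" by (rule kv_mult[OF assms]) simp_all
  hence "v 1 + v 1 = v 1" by simp
  thus ?thesis by (metis add_cancel_right_right)
qed

lemma self_add_zero: "(x::'g::linordered_ab_group_add) + x = 0 \<Longrightarrow> x = 0"
proof (rule ccontr)
  assume h: "x + x = 0" "x \<noteq> 0"
  show False
  proof (cases "x < 0")
    case True then have "x + x < 0" using add_neg_neg by blast
    with h show False by simp
  next
    case False with h have "0 < x" by simp
    then have "0 < x + x" using add_pos_pos by blast
    with h show False by simp
  qed
qed

lemma kv_minus1: assumes "krull_valuation v" shows "v (-1) = 0"
proof -
  have "v ((-1)*(-1)) = v (-1) + v (-1)" by (rule kv_mult[OF assms]) simp_all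
  hence "v (-1) + v (-1) = 0" using kv_one[OF assms] by simp
  thus ?thesis using self_add_zero by blast
qed

lemma kv_uminus: assumes "krull_valuation v" shows "v (-a) = v a"
proof (cases "a = 0")
  case True then show ?thesis by simp
next
  case False
  have "v ((-1) * a) = v (-1) + v a" using kv_mult[OF assms, of "-1" a] False by simp
  thus ?thesis using kv_minus1[OF assms] by simp
qed

lemma geqv_add: assumes "krull_valuation v" "geqv v x t" "geqv v y t" shows "geqv v (x + y) t"
  using assms kv_add[OF assms(1), of x y] unfolding geqv_def
  by (cases "x = 0"; cases "y = 0"; cases "x + y = 0") (auto simp: min_def split: if_splits)

lemma gtv_add: assumes "krull_valuation v" "gtv v x t" "gtv v y t" shows "gtv v (x + y) t"
  using assms kv_add[OF assms(1), of x y] unfolding gtv_def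
  by (cases "x = 0"; cases "y = 0"; cases "x + y = 0") (auto simp: min_def split: if_splits)

lemma geqv_sum: assumes "krull_valuation v" "\<And>i. i \<in> A \<Longrightarrow> geqv v (f i) t" shows "geqv v (sum f A) t"
  using assms(2)
proof (induction A rule: infinite_finite_induct)
  case (infinite A) then show ?case by (simp add: geqv_def)
next
  case empty then show ?case by (simp add: geqv_def)
next
  case (insert x F) then show ?case by (simp add: geqv_add[OF assms(1)])
qed

lemma gtv_sum: assumes "krull_valuation v" "\<And>i. i \<in> A \<Longrightarrow> gtv v (f i) t" shows "gtv v (sum f A) t"
  using assms(2)
proof (induction A rule: infinite_finite_induct)
  case (infinite A) then show ?case by (simp add: gtv_def)
next
  case empty then show ?case by (simp add: gtv_def)
next
  case (insert x F) then show ?case by (simp add: gtv_add[OF assms(1)])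
qed

lemma kv_strict: assumes "krull_valuation v" "a \<noteq> 0" "v a < v b" "b \<noteq> 0"
  shows "a + b \<noteq> 0 \<and> v (a + b) = v a"
proof
  show ab: "a + b \<noteq> 0"
  proof
    assume "a + b = 0" then have "a = - b" by (simp add: eq_neg_iff_add_eq_0)
    then have "v a = v b" using kv_uminus[OF assms(1)] by simp
    with assms show False by simp
  qed
  have 1: "min (v a) (v b) \<le> v (a + b)" using kv_add[OF assms(1)] ab assms by blast
  have 2: "min (v (a+b)) (v (-b)) \<le> v (a + b + - b)"
    using kv_add[OF assms(1), of "a+b" "-b"] ab assms by simp
  have "v (-b) = v b" by (rule kv_uminus[OF assms(1)])
  with 1 2 assms(3) show "v (a + b) = v a" by (auto simp: min_def split: if_splits)
qed

lemma gtv_exact: assumes "krull_valuation v" "x \<noteq> 0" "v x = t" "gtv v y t"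
  shows "x + y \<noteq> 0 \<and> v (x + y) = t"
proof (cases "y = 0")
  case True then show ?thesis using assms by simp
next
  case False
  then have "t < v y" using assms(4) unfolding gtv_def by simp
  then show ?thesis using kv_strict[OF assms(1) assms(2), of y] False assms(3) by simp
qed

lemma geqv_mult: assumes "krull_valuation v" "geqv v x s" "geqv v y t" shows "geqv v (x * y) (s + t)"
  using assms kv_mult[OF assms(1), of x y] unfolding geqv_def by (cases "x = 0"; cases "y = 0") (auto intro: add_mono)

lemma gtv_mult: assumes "krull_valuation v" "gtv v x s" "geqv v y t" shows "gtv v (x * y) (s + t)"
  using assms kv_mult[OF assms(1), of x y] unfolding geqv_def gtv_def by (cases "x = 0"; cases "y = 0") (auto intro: add_less_le_mono)

lemma gtv_mult': assumes "krull_valuation v" "geqv v x s" "gtv v y t" shows "gtv v (x * y) (s + t)"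
  using assms kv_mult[OF assms(1), of x y] unfolding geqv_def gtv_def by (cases "x = 0"; cases "y = 0") (auto intro: add_le_less_mono)

lemma geqv_mono: "geqv v x t \<Longrightarrow> s \<le> t \<Longrightarrow> geqv v x s"
  unfolding geqv_def by auto
lemma gtv_mono: "gtv v x t \<Longrightarrow> s \<le> t \<Longrightarrow> gtv v x s"
  unfolding gtv_def by auto
lemma geqv_gtv: "geqv v x t \<Longrightarrow> s < t \<Longrightarrow> gtv v x s"
  unfolding geqv_def gtv_def by auto
lemma gtv_geqv: "gtv v x t \<Longrightarrow> geqv v x t"
  unfolding geqv_def gtv_def by auto

lemma gscale_0[simp]: "gscale 0 g = 0" by (simp add: gscale_def)
lemma gscale_Suc: "gscale (Suc n) g = g + gscale n g" by (simp add: gscale_def add.commute)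
lemma gscale_1[simp]: "gscale 1 g = g" by (simp add: gscale_def)
lemma gscale_add: "gscale (m + n) g = gscale m g + gscale n g"
  by (induction m) (simp_all add: gscale_Suc add.assoc)
lemma gscale_distrib: "gscale n (x + y) = gscale n x + gscale n y"
  by (induction n) (simp_all add: gscale_Suc algebra_simps)
lemma gscale_minus: "gscale n (- x) = - gscale n x"
  by (induction n) (simp_all add: gscale_Suc algebra_simps)
lemma gscale_diff: "gscale n (x - y) = gscale n x - gscale n y"
  using gscale_distrib[of n x "-y"] gscale_minus[of n y] by simp
lemma gscale_mult: "gscale (m * n) g = gscale m (gscale n g)"
  by (induction m) (simp_all add: gscale_Suc gscale_add)
lemma gscale_comm: "gscale m (gscale n g) = gscale n (gscale m g)"
  by (metis gscale_mult mult.commute)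
lemma gscale_mono: "(x::'g::linordered_ab_group_add) \<le> y \<Longrightarrow> gscale n x \<le> gscale n y"
  by (induction n) (simp_all add: gscale_Suc add_mono)
lemma gscale_diff_nat: "m \<le> n \<Longrightarrow> gscale n g = gscale m g + gscale (n - m) g"
  by (metis gscale_add le_add_diff_inverse)




section \<open>Hasse derivatives\<close>

lemma coeff_hasse: "coeff (hasse_deriv b f) n = of_nat ((n+b) choose b) * coeff f (n+b)"
proof -
  have "coeff (hasse_deriv b f) n =
     (\<Sum>i\<in>{b..degree f}. if i = n + b then of_nat (i choose b) * coeff f i else 0)"
    unfolding hasse_deriv_def coeff_sum coeff_monom
    by (intro sum.cong refl) auto
  also have "\<dots> = (if n + b \<in> {b..degree f} then of_nat ((n+b) choose b) * coeff f (n+b) else 0)"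
    by (simp add: sum.delta)
  also have "\<dots> = of_nat ((n+b) choose b) * coeff f (n+b)"
    by (auto simp: coeff_eq_0)
  finally show ?thesis .
qed

lemma hasse_0[simp]: "hasse_deriv 0 f = f"
  by (rule poly_eqI) (simp add: coeff_hasse)

lemma hasse_high: "degree f < b \<Longrightarrow> hasse_deriv b f = 0"
  unfolding hasse_deriv_def by simp

lemma coeff_lin_mult: fixes c :: "'a::comm_ring_1" shows "coeff ([:-c,1:] * p) n = (if n = 0 then 0 else coeff p (n-1)) - c * coeff p n"
  by (cases n) auto

lemma hasse_lin: fixes c :: "'a::comm_ring_1" shows
  "hasse_deriv (Suc b) ([:-c,1:] * g) = [:-c,1:] * hasse_deriv (Suc b) g + hasse_deriv b g"
proof (rule poly_eqI)
  fix n
  show "coeff (hasse_deriv (Suc b) ([:-c,1:] * g)) n = coeff ([:-c,1:] * hasse_deriv (Suc b) g + hasse_deriv b g) n"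
  proof (cases n)
    case 0
    then show ?thesis by (simp add: coeff_hasse coeff_lin_mult algebra_simps)
  next
    case (Suc m)
    have pas: "((Suc m + Suc b) choose (Suc b)) = ((m + Suc b) choose (Suc b)) + ((Suc m + b) choose b)"
      by simp
    show ?thesis using Suc
      by (simp add: coeff_hasse coeff_lin_mult pas algebra_simps)
  qed
qed

lemma map_hasse: "map_poly to_ac (hasse_deriv b f) = hasse_deriv b (map_poly to_ac f)"
  by (rule poly_eqI) (simp add: coeff_hasse coeff_map_poly)




lemma root_split:
  fixes G :: "'a::alg_closed_field poly"
  assumes "degree G > 0"
  obtains c H where "G = [:-c,1:] * H" "H \<noteq> 0" "degree H < degree G"
    "\<And>d. poly G d = 0 \<longleftrightarrow> d = c \<or> poly H d = 0"
proof -
  obtain c where c: "poly G c = 0" using alg_closed_imp_poly_has_root[OF assms] by blast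
  then have "[:-c,1:] dvd G" by (simp add: poly_eq_0_iff_dvd)
  then obtain H where H: "G = [:-c,1:] * H" by (elim dvdE)
  have G0: "G \<noteq> 0" using assms by auto
  then have H0: "H \<noteq> 0" using H by auto
  have "degree G = degree [:-c,1:] + degree H" unfolding H by (rule degree_mult_eq) (use H0 in auto)
  then have "degree H < degree G" by simp
  moreover have "\<And>d. poly G d = 0 \<longleftrightarrow> d = c \<or> poly H d = 0" using H by auto
  ultimately show ?thesis using that H H0 by blast
qed

lemma ord_aux1: "(l::'g::linordered_ab_group_add) \<le> d \<Longrightarrow> l + h - gscale (Suc b) d \<le> h - gscale b d"
  by (simp add: gscale_Suc algebra_simps)
lemma ord_aux2: "(l::'g::linordered_ab_group_add) < d \<Longrightarrow> l + h - gscale (Suc b) d < h - gscale b d"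
  by (simp add: gscale_Suc algebra_simps)

lemma hasse_val:
  fixes G :: "'a::alg_closed_field poly" and \<mu> :: "'a poly \<Rightarrow> 'g::linordered_ab_group_add"
  assumes kv: "krull_valuation \<mu>" and "G \<noteq> 0"
    and "\<And>c. poly G c = 0 \<Longrightarrow> \<mu> [:-c,1:] \<le> \<delta>"
  shows "\<exists>m. hasse_deriv m G \<noteq> 0 \<and> \<mu> (hasse_deriv m G) = \<mu> G - gscale m \<delta> \<and>
     (\<forall>b>m. gtv \<mu> (hasse_deriv b G) (\<mu> G - gscale b \<delta>)) \<and>
     (\<forall>b. geqv \<mu> (hasse_deriv b G) (\<mu> G - gscale b \<delta>)) \<and>
     (m = 0 \<longrightarrow> (\<forall>c. poly G c = 0 \<longrightarrow> \<mu> [:-c,1:] < \<delta>))"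
  using assms(2,3)
proof (induction "degree G" arbitrary: G rule: less_induct)
  case less
  show ?case
  proof (cases "degree G = 0")
    case True
    then obtain g where g: "G = [:g:]" by (metis degree_eq_zeroE)
    have hz: "hasse_deriv b G = 0" if "b > 0" for b using True that by (simp add: hasse_high)
    have nr: "poly G c \<noteq> 0" for c using g less.prems(1) by simp
    have gb: "geqv \<mu> (hasse_deriv b G) (\<mu> G - gscale b \<delta>)" for b
      by (cases "b = 0") (simp_all add: hz geqv_def)
    show ?thesis
      apply (rule exI[of _ 0])
      using less.prems(1) hz gb nr by (simp add: gtv_def)
  next
    case False
    then obtain c H where H: "G = [:-c,1:] * H" "H \<noteq> 0" "degree H < degree G"
      "\<And>d. poly G d = 0 \<longleftrightarrow> d = c \<or> poly H d = 0"
      using root_split[of G] by auto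
    define L where "L = [:-c,1:]"
    have L0: "L \<noteq> 0" by (simp add: L_def)
    have GL: "G = L * H" using H L_def by simp
    have muG: "\<mu> G = \<mu> L + \<mu> H" using kv_mult[OF kv L0 H(2)] GL by simp
    have lle: "\<mu> L \<le> \<delta>" using less.prems(2)[of c] H(4) L_def by auto
    have rootsH: "\<And>d. poly H d = 0 \<Longrightarrow> \<mu> [:-d,1:] \<le> \<delta>" using less.prems(2) H(4) by blast
    obtain m where m: "hasse_deriv m H \<noteq> 0" "\<mu> (hasse_deriv m H) = \<mu> H - gscale m \<delta>"
      "\<forall>b>m. gtv \<mu> (hasse_deriv b H) (\<mu> H - gscale b \<delta>)"
      "\<forall>b. geqv \<mu> (hasse_deriv b H) (\<mu> H - gscale b \<delta>)"
      "m = 0 \<longrightarrow> (\<forall>c. poly H c = 0 \<longrightarrow> \<mu> [:-c,1:] < \<delta>)"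
      using less.hyps[OF H(3) H(2) rootsH] by blast
    have hs: "hasse_deriv (Suc b) G = L * hasse_deriv (Suc b) H + hasse_deriv b H" for b
      using hasse_lin[of b c H] GL L_def by simp
    have geqL: "geqv \<mu> L (\<mu> L)" by (simp add: geqv_def)
    have eq1: "\<mu> L + (\<mu> H - gscale b \<delta>) = \<mu> G - gscale b \<delta>" for b
      using muG by (simp add: algebra_simps)
    have geqall: "geqv \<mu> (hasse_deriv b G) (\<mu> G - gscale b \<delta>)" for b
    proof (cases b)
      case 0 then show ?thesis by (simp add: geqv_def)
    next
      case (Suc b')
      have 1: "geqv \<mu> (L * hasse_deriv (Suc b') H) (\<mu> G - gscale (Suc b') \<delta>)"
        using geqv_mult[OF kv geqL m(4)[rule_format, of "Suc b'"]] eq1 by simp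
      have 2: "geqv \<mu> (hasse_deriv b' H) (\<mu> G - gscale (Suc b') \<delta>)"
        using geqv_mono[OF m(4)[rule_format, of b']] ord_aux1[OF lle] muG by simp
      show ?thesis using geqv_add[OF kv 1 2] hs Suc by simp
    qed
    show ?thesis
    proof (cases "\<mu> L = \<delta>")
      case True
      have gt1: "gtv \<mu> (L * hasse_deriv (Suc b) H) (\<mu> G - gscale (Suc b) \<delta>)" if "b \<ge> m" for b
        using gtv_mult'[OF kv geqL m(3)[rule_format, of "Suc b"]] eq1 that by simp
      have ex: "hasse_deriv (Suc m) G \<noteq> 0 \<and> \<mu> (hasse_deriv (Suc m) G) = \<mu> G - gscale (Suc m) \<delta>"
      proof -
        have e: "\<mu> (hasse_deriv m H) = \<mu> G - gscale (Suc m) \<delta>"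
          using m(2) muG True by (simp add: gscale_Suc algebra_simps)
        show ?thesis using gtv_exact[OF kv m(1) e gt1[of m]] hs[of m] by (simp add: add.commute)
      qed
      have gtb: "gtv \<mu> (hasse_deriv b G) (\<mu> G - gscale b \<delta>)" if bm: "b > Suc m" for b
      proof -
        obtain b' where b': "b = Suc b'" "b' > m" using bm by (cases b) auto
        have 2: "gtv \<mu> (hasse_deriv b' H) (\<mu> G - gscale (Suc b') \<delta>)"
          using m(3)[rule_format, OF b'(2)] muG True by (simp add: gscale_Suc algebra_simps)
        show ?thesis using gtv_add[OF kv gt1[of b'] 2] b' hs by simp
      qed
      show ?thesis using ex gtb geqall by (intro exI[of _ "Suc m"]) auto
    next
      case False
      with lle have llt: "\<mu> L < \<delta>" by simp
      have gt2: "gtv \<mu> (hasse_deriv b H) (\<mu> G - gscale (Suc b) \<delta>)" for b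
        using geqv_gtv[OF m(4)[rule_format, of b]] ord_aux2[OF llt] muG by simp
      have ex: "hasse_deriv m G \<noteq> 0 \<and> \<mu> (hasse_deriv m G) = \<mu> G - gscale m \<delta>"
      proof (cases m)
        case 0 then show ?thesis using less.prems by simp
      next
        case (Suc m')
        have ne: "L * hasse_deriv m H \<noteq> 0" using L0 m(1) by simp
        have e: "\<mu> (L * hasse_deriv m H) = \<mu> G - gscale m \<delta>"
          using kv_mult[OF kv L0 m(1)] m(2) eq1 by simp
        have g2: "gtv \<mu> (hasse_deriv m' H) (\<mu> G - gscale m \<delta>)" using gt2[of m'] Suc by simp
        show ?thesis using gtv_exact[OF kv ne e g2] hs[of m'] Suc by simp
      qed
      have gtb: "gtv \<mu> (hasse_deriv b G) (\<mu> G - gscale b \<delta>)" if bm: "b > m" for b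
      proof -
        obtain b' where b': "b = Suc b'" using bm by (cases b) auto
        have 1: "gtv \<mu> (L * hasse_deriv b H) (\<mu> G - gscale b \<delta>)"
          using gtv_mult'[OF kv geqL m(3)[rule_format, OF bm]] eq1 by simp
        show ?thesis using gtv_add[OF kv 1[unfolded b'] gt2[of b']] b' hs by simp
      qed
      have z: "m = 0 \<longrightarrow> (\<forall>d. poly G d = 0 \<longrightarrow> \<mu> [:-d,1:] < \<delta>)"
        using m(5) H(4) llt L_def by auto
      show ?thesis using ex gtb geqall z by (intro exI[of _ m]) auto
    qed
  qed
qed




section \<open>Monomial-valuation leading data\<close>

lemma kv_const: assumes "krull_valuation \<mu>" shows "krull_valuation (\<lambda>x. \<mu> [:x:])"
proof -
  have m: "[:a * b:] = [:a:] * [:b:]" for a b :: 'a by simp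
  have p: "[:a + b:] = [:a:] + [:b:]" for a b :: 'a by simp
  show ?thesis unfolding krull_valuation_def
  proof (intro conjI allI impI)
    fix a b :: 'a assume h: "a \<noteq> 0" "b \<noteq> 0"
    show "\<mu> [:a*b:] = \<mu> [:a:] + \<mu> [:b:]" unfolding m by (rule kv_mult[OF assms]) (use h in simp_all)
    assume "a + b \<noteq> 0"
    then show "min (\<mu> [:a:]) (\<mu> [:b:]) \<le> \<mu> [:a+b:]" unfolding p by (intro kv_add[OF assms]) (use h in simp_all)
  qed
qed

definition lead :: "('a::field poly \<Rightarrow> 'g::linordered_ab_group_add) \<Rightarrow> 'g \<Rightarrow> 'a poly \<Rightarrow> 'g \<Rightarrow> nat \<Rightarrow> bool" where
  "lead \<mu> \<gamma> P t k \<longleftrightarrow> coeff P k \<noteq> 0 \<and> \<mu> [:coeff P k:] + gscale k \<gamma> = t \<and>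
     (\<forall>j. geqv (\<lambda>x. \<mu> [:x:]) (coeff P j) (t - gscale j \<gamma>)) \<and>
     (\<forall>j>k. gtv (\<lambda>x. \<mu> [:x:]) (coeff P j) (t - gscale j \<gamma>))"

lemma thr_aux: "i \<le> n \<Longrightarrow> (t - gscale i \<gamma>) + (s - gscale (n - i) \<gamma>) = (t + s) - gscale n (\<gamma>::'g::linordered_ab_group_add)"
  using gscale_diff_nat[of i n \<gamma>] by (simp add: algebra_simps)

lemma lead_mult:
  assumes kv: "krull_valuation \<mu>" and P: "lead \<mu> \<gamma> P t k" and R: "lead \<mu> \<gamma> R s l"
  shows "lead \<mu> \<gamma> (P * R) (t + s) (k + l)"
proof -
  define w where "w = (\<lambda>x. \<mu> [:x:])"
  have kw: "krull_valuation w" unfolding w_def by (rule kv_const[OF kv])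
  from P have P1: "coeff P k \<noteq> 0" "w (coeff P k) + gscale k \<gamma> = t"
    "\<And>j. geqv w (coeff P j) (t - gscale j \<gamma>)" "\<And>j. j > k \<Longrightarrow> gtv w (coeff P j) (t - gscale j \<gamma>)"
    unfolding lead_def w_def by auto
  from R have R1: "coeff R l \<noteq> 0" "w (coeff R l) + gscale l \<gamma> = s"
    "\<And>j. geqv w (coeff R j) (s - gscale j \<gamma>)" "\<And>j. j > l \<Longrightarrow> gtv w (coeff R j) (s - gscale j \<gamma>)"
    unfolding lead_def w_def by auto
  have term_geq: "geqv w (coeff P i * coeff R (n - i)) ((t + s) - gscale n \<gamma>)" if "i \<le> n" for i n
    using geqv_mult[OF kw P1(3)[of i] R1(3)[of "n-i"]] unfolding thr_aux[OF that] .
  have term_gt: "gtv w (coeff P i * coeff R (n - i)) ((t + s) - gscale n \<gamma>)"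
    if "i \<le> n" "i > k \<or> n - i > l" for i n
  proof (cases "i > k")
    case True show ?thesis
      using gtv_mult[OF kw P1(4)[OF True] R1(3)[of "n-i"]] unfolding thr_aux[OF that(1)] .
  next
    case False have nl: "n - i > l" using that False by simp
    show ?thesis
      using gtv_mult'[OF kw P1(3)[of i] R1(4)[OF nl]] unfolding thr_aux[OF that(1)] .
  qed
  have allg: "geqv w (coeff (P * R) n) ((t + s) - gscale n \<gamma>)" for n
    unfolding coeff_mult by (rule geqv_sum[OF kw]) (simp add: term_geq)
  have allgt: "gtv w (coeff (P * R) n) ((t + s) - gscale n \<gamma>)" if "n > k + l" for n
    unfolding coeff_mult by (rule gtv_sum[OF kw]) (use that in \<open>auto intro!: term_gt\<close>)
  define n where "n = k + l"
  have ne: "coeff P k * coeff R (n - k) \<noteq> 0" using P1(1) R1(1) n_def by simp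
  have ev: "w (coeff P k * coeff R (n - k)) = (t + s) - gscale n \<gamma>"
  proof -
    have "w (coeff P k * coeff R (n - k)) = w (coeff P k) + w (coeff R l)"
      using kv_mult[OF kw P1(1) R1(1)] n_def by simp
    also have "\<dots> = (t - gscale k \<gamma>) + (s - gscale l \<gamma>)"
      using P1(2) R1(2) by (simp add: algebra_simps)
    also have "\<dots> = (t + s) - gscale n \<gamma>"
      using gscale_add[of k l \<gamma>] n_def by (simp add: algebra_simps)
    finally show ?thesis .
  qed
  have rest: "gtv w (\<Sum>i\<in>{..n} - {k}. coeff P i * coeff R (n - i)) ((t + s) - gscale n \<gamma>)"
    by (rule gtv_sum[OF kw]) (auto intro!: term_gt simp: n_def)
  have split: "coeff (P * R) n = coeff P k * coeff R (n - k) + (\<Sum>i\<in>{..n} - {k}. coeff P i * coeff R (n - i))"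
    unfolding coeff_mult by (subst sum.remove[of _ k]) (auto simp: n_def)
  have ex: "coeff (P * R) n \<noteq> 0 \<and> w (coeff (P * R) n) = (t + s) - gscale n \<gamma>"
    using gtv_exact[OF kw ne ev rest] split by simp
  show ?thesis unfolding lead_def using ex allg allgt n_def by (simp add: w_def)
qed

lemma lead_one: assumes "krull_valuation \<mu>" shows "lead \<mu> \<gamma> 1 0 0"
proof -
  have "\<mu> [:1:] = 0" using kv_one[OF assms] by (simp add: one_pCons)
  then show ?thesis unfolding lead_def by (auto simp: geqv_def gtv_def coeff_1)
qed

lemma lead_power: assumes "krull_valuation \<mu>" "lead \<mu> \<gamma> P t k" shows "lead \<mu> \<gamma> (P ^ n) (gscale n t) (n * k)"
proof (induction n)
  case 0 then show ?case using lead_one[OF assms(1)] by simp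
next
  case (Suc n)
  have "lead \<mu> \<gamma> (P * P ^ n) (t + gscale n t) (k + n * k)" by (rule lead_mult[OF assms(1) assms(2) Suc])
  then show ?case by (simp add: gscale_Suc)
qed

lemma lead_const: "c \<noteq> 0 \<Longrightarrow> lead \<mu> \<gamma> [:c:] (\<mu> [:c:]) 0"
  unfolding lead_def by (auto simp: geqv_def gtv_def coeff_pCons split: nat.splits)

lemma lead_linear:
  assumes kv: "krull_valuation \<mu>" and g: "\<gamma> = \<mu> [:-a,1:]" and le: "\<mu> [:-c,1:] \<le> \<gamma>"
  shows "\<exists>k. lead \<mu> \<gamma> [:a - c, 1:] (\<mu> [:-c,1:]) k \<and> (k = 0 \<longleftrightarrow> \<mu> [:-c,1:] < \<gamma>)"
proof -
  define w where "w = (\<lambda>x. \<mu> [:x:])"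
  have kw: "krull_valuation w" unfolding w_def by (rule kv_const[OF kv])
  have X0: "[:-a,1:] \<noteq> 0" by simp
  have mX: "\<mu> [:a,-1:] = \<gamma>"
  proof -
    have "[:a,-1:] = - [:-a,1:]" by simp
    then show ?thesis using kv_uminus[OF kv, of "[:-a,1:]"] g by simp
  qed
  have dec: "[:a - c:] = [:-c,1:] + [:a,-1:]" by simp
  have w1: "w 1 = 0" using kv_one[OF kw] .
  show ?thesis
  proof (cases "\<mu> [:-c,1:] < \<gamma>")
    case True
    have s: "[:-c,1:] + [:a,-1:] \<noteq> 0 \<and> \<mu> ([:-c,1:] + [:a,-1:]) = \<mu> [:-c,1:]"
      using kv_strict[OF kv, of "[:-c,1:]" "[:a,-1:]"] True mX by simp
    then have s2: "[:a - c:] \<noteq> 0" "\<mu> [:a - c:] = \<mu> [:-c,1:]" unfolding dec[symmetric] by blast+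
    then have ac: "a - c \<noteq> 0" "w (a - c) = \<mu> [:-c,1:]" unfolding w_def by simp_all
    have "lead \<mu> \<gamma> [:a - c, 1:] (\<mu> [:-c,1:]) 0"
      unfolding lead_def
    proof (intro conjI allI impI)
      show "coeff [:a - c, 1:] 0 \<noteq> 0" using ac by simp
      show "\<mu> [:coeff [:a - c, 1:] 0:] + gscale 0 \<gamma> = \<mu> [:-c,1:]" using ac by (simp add: w_def)
      fix j
      show "geqv (\<lambda>x. \<mu> [:x:]) (coeff [:a - c, 1:] j) (\<mu> [:-c,1:] - gscale j \<gamma>)"
      proof (cases j)
        case 0 then show ?thesis using ac by (simp add: geqv_def w_def gscale_Suc)
      next
        case (Suc j') then show ?thesis
        proof (cases j')
          case 0
          have "\<mu> [:-c,1:] - \<gamma> \<le> 0" using True by simp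
          then show ?thesis using Suc 0 w1 by (simp add: geqv_def w_def gscale_Suc)
        qed (simp add: geqv_def)
      qed
    next
      fix j :: nat assume "j > 0"
      then obtain j' where j: "j = Suc j'" by (cases j) auto
      show "gtv (\<lambda>x. \<mu> [:x:]) (coeff [:a - c, 1:] j) (\<mu> [:-c,1:] - gscale j \<gamma>)"
      proof (cases j')
        case 0
        have "\<mu> [:-c,1:] - \<gamma> < 0" using True by simp
        then show ?thesis using j 0 w1 by (simp add: gtv_def w_def gscale_Suc)
      qed (simp add: gtv_def j)
    qed
    then show ?thesis using True by blast
  next
    case False
    with le have eq: "\<mu> [:-c,1:] = \<gamma>" by simp
    have g0: "geqv \<mu> [:-c,1:] \<gamma>" "geqv \<mu> [:a,-1:] \<gamma>" using eq mX by (auto simp: geqv_def)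
    have "geqv \<mu> [:a - c:] \<gamma>" by (subst dec) (rule geqv_add[OF kv g0])
    then have wac: "geqv w (a - c) \<gamma>" unfolding w_def geqv_def by auto
    have "lead \<mu> \<gamma> [:a - c, 1:] (\<mu> [:-c,1:]) 1"
      unfolding lead_def
    proof (intro conjI allI impI)
      show "coeff [:a - c, 1:] 1 \<noteq> 0" by simp
      show "\<mu> [:coeff [:a - c, 1:] 1:] + gscale 1 \<gamma> = \<mu> [:-c,1:]" using w1 eq by (simp add: w_def gscale_Suc)
      fix j
      show "geqv (\<lambda>x. \<mu> [:x:]) (coeff [:a - c, 1:] j) (\<mu> [:-c,1:] - gscale j \<gamma>)"
      proof (cases j)
        case 0 then show ?thesis using wac eq by (simp add: w_def)
      next
        case (Suc j') then show ?thesis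
        proof (cases j')
          case 0 then show ?thesis using Suc w1 eq by (simp add: geqv_def w_def gscale_Suc)
        qed (simp add: geqv_def)
      qed
    next
      fix j :: nat assume "j > 1"
      then obtain j' where j: "j = Suc (Suc j')" by (cases j; cases "j - 1") auto
      show "gtv (\<lambda>x. \<mu> [:x:]) (coeff [:a - c, 1:] j) (\<mu> [:-c,1:] - gscale j \<gamma>)"
        by (simp add: gtv_def j)
    qed
    then show ?thesis using eq by (intro exI[of _ 1]) auto
  qed
qed

lemma lead_roots:
  fixes G :: "'a::alg_closed_field poly" and \<mu> :: "'a poly \<Rightarrow> 'g::linordered_ab_group_add"
  assumes kv: "krull_valuation \<mu>" and g: "\<gamma> = \<mu> [:-a,1:]" and "G \<noteq> 0"
    and "\<And>c. poly G c = 0 \<Longrightarrow> \<mu> [:-c,1:] \<le> \<gamma>"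
  shows "\<exists>m. lead \<mu> \<gamma> (pcompose G [:a,1:]) (\<mu> G) m \<and> (m = 0 \<longleftrightarrow> (\<forall>c. poly G c = 0 \<longrightarrow> \<mu> [:-c,1:] < \<gamma>))"
  using assms(3,4)
proof (induction "degree G" arbitrary: G rule: less_induct)
  case less
  show ?case
  proof (cases "degree G = 0")
    case True
    then obtain g where gg: "G = [:g:]" by (metis degree_eq_zeroE)
    have "g \<noteq> 0" using less.prems gg by simp
    then show ?thesis using gg lead_const[of g \<mu> \<gamma>] by (intro exI[of _ 0]) simp
  next
    case False
    then obtain c H where H: "G = [:-c,1:] * H" "H \<noteq> 0" "degree H < degree G"
      "\<And>d. poly G d = 0 \<longleftrightarrow> d = c \<or> poly H d = 0"
      using root_split[of G] by auto
    have le: "\<mu> [:-c,1:] \<le> \<gamma>" using less.prems(2)[of c] H(4) by auto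
    have rootsH: "\<And>d. poly H d = 0 \<Longrightarrow> \<mu> [:-d,1:] \<le> \<gamma>" using less.prems(2) H(4) by blast
    obtain m where m: "lead \<mu> \<gamma> (pcompose H [:a,1:]) (\<mu> H) m"
      "m = 0 \<longleftrightarrow> (\<forall>c. poly H c = 0 \<longrightarrow> \<mu> [:-c,1:] < \<gamma>)"
      using less.hyps[OF H(3) H(2) rootsH] by blast
    obtain k where k: "lead \<mu> \<gamma> [:a - c, 1:] (\<mu> [:-c,1:]) k" "k = 0 \<longleftrightarrow> \<mu> [:-c,1:] < \<gamma>"
      using lead_linear[OF kv g le] by blast
    have pc: "pcompose [:-c,1:] [:a,1:] = [:a - c, 1:]" by (simp add: pcompose_pCons)
    have pG: "pcompose G [:a,1:] = [:a - c, 1:] * pcompose H [:a,1:]"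
      unfolding H(1) pcompose_mult pc ..
    have muG: "\<mu> G = \<mu> [:-c,1:] + \<mu> H" using kv_mult[OF kv _ H(2), of "[:-c,1:]"] H(1) by simp
    have "lead \<mu> \<gamma> (pcompose G [:a,1:]) (\<mu> G) (k + m)"
      using lead_mult[OF kv k(1) m(1)] pG muG by simp
    moreover have "k + m = 0 \<longleftrightarrow> (\<forall>d. poly G d = 0 \<longrightarrow> \<mu> [:-d,1:] < \<gamma>)"
      using k(2) m(2) H(4) by auto
    ultimately show ?thesis by blast
  qed
qed




lemma kv_power: assumes "krull_valuation v" "x \<noteq> 0" shows "v (x ^ n) = gscale n (v x)"
proof (induction n)
  case 0 then show ?case using kv_one[OF assms(1)] by simp
next
  case (Suc n) then show ?case using kv_mult[OF assms(1) assms(2), of "x^n"] assms(2) by (simp add: gscale_Suc)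
qed

lemma qexp_X: fixes a :: "'a::field"
  shows "qexp_coeff [:-a,1:] F i = [:coeff (pcompose F [:a,1:]) i:]"
proof (induction i arbitrary: F)
  case 0
  define s where "s = synthetic_div F a"
  have F: "F = [:poly F a:] + s * [:-a,1:]" using synthetic_div_correct'[of a F] s_def by (simp add: algebra_simps)
  have "F mod [:-a,1:] = [:poly F a:]"
    by (subst F, subst mod_mult_self1) (rule mod_poly_less, simp)
  then show ?case by (simp add: qexp_coeff_def pcompose_coeff_0)
next
  case (Suc i)
  define s where "s = synthetic_div F a"
  have F: "F = [:poly F a:] + s * [:-a,1:]" using synthetic_div_correct'[of a F] s_def by (simp add: algebra_simps)
  have d: "F div [:-a,1:] = s"
  proof -
    have "F div [:-a,1:] = s + [:poly F a:] div [:-a,1:]"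
      by (subst F, subst div_mult_self1) simp_all
    also have "[:poly F a:] div [:-a,1:] = 0" by (rule div_poly_less) simp
    finally show ?thesis by simp
  qed
  have q: "qexp_coeff [:-a,1:] F (Suc i) = qexp_coeff [:-a,1:] s i"
    unfolding qexp_coeff_def power_Suc poly_div_mult_right d ..
  have pc: "pcompose [:-a,1:] [:a,1:] = [:0,1:]" by (simp add: pcompose_pCons)
  have "pcompose F [:a,1:] = [:poly F a:] + pcompose s [:a,1:] * [:0,1:]"
    by (subst F) (simp only: pcompose_add pcompose_mult pc pcompose_const)
  then have "coeff (pcompose F [:a,1:]) (Suc i) = coeff (pcompose s [:a,1:]) i"
    by (simp add: coeff_pCons)
  then show ?case using q Suc.IH[of s] by simp
qed

lemma qexp_expand_gen: fixes q f :: "'a::field poly"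
  shows "f = (\<Sum>i<N. qexp_coeff q f i * q ^ i) + q ^ N * (f div q ^ N)"
proof (induction N)
  case 0 then show ?case by simp
next
  case (Suc N)
  define g where "g = f div q ^ N"
  have g: "g = g mod q + q * (g div q)" by (simp add: mod_mult_div_eq)
  have gd: "g div q = f div q ^ Suc N" unfolding g_def power_Suc2 poly_div_mult_right ..
  have "q ^ N * g = q ^ N * (g mod q) + q ^ N * q * (g div q)"
    by (metis mod_mult_div_eq distrib_left mult.assoc)
  also have "\<dots> = qexp_coeff q f N * q ^ N + q ^ Suc N * (f div q ^ Suc N)"
    unfolding power_Suc2[symmetric] gd by (simp add: qexp_coeff_def g_def mult.commute)
  finally have "q ^ N * g = qexp_coeff q f N * q ^ N + q ^ Suc N * (f div q ^ Suc N)" .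
  then show ?case using Suc.IH g_def by (simp add: algebra_simps)
qed

lemma qexp_expand: fixes q f :: "'a::field poly" assumes "degree q > 0"
  shows "f = (\<Sum>i<Suc (degree f). qexp_coeff q f i * q ^ i)"
proof -
  have q0: "q \<noteq> 0" using assms by auto
  have "degree (q ^ Suc (degree f)) = Suc (degree f) * degree q" by (rule degree_power_eq[OF q0])
  also have "\<dots> \<ge> Suc (degree f)"
  proof -
    have "1 \<le> degree q" using assms by simp
    then show ?thesis by (metis mult_le_mono2 mult.right_neutral)
  qed
  finally have "f div q ^ Suc (degree f) = 0" by (intro div_poly_less) simp
  then show ?thesis using qexp_expand_gen[of f q "Suc (degree f)"] by simp
qed

lemma trunc_X:
  fixes \<mu> :: "'a::field poly \<Rightarrow> 'g::linordered_ab_group_add"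
  assumes kv: "krull_valuation \<mu>" and g: "\<gamma> = \<mu> [:-a,1:]" and F0: "F \<noteq> 0"
    and ck: "coeff (pcompose F [:a,1:]) k \<noteq> 0"
    and ek: "\<mu> [:coeff (pcompose F [:a,1:]) k:] + gscale k \<gamma> = t"
    and ge: "\<And>j. geqv (\<lambda>x. \<mu> [:x:]) (coeff (pcompose F [:a,1:]) j) (t - gscale j \<gamma>)"
  shows "trunc_val \<mu> [:-a,1:] F = t"
proof -
  define P where "P = pcompose F [:a,1:]"
  have degP: "degree P = degree F" unfolding P_def by (simp add: degree_pcompose)
  have val: "\<mu> (smult c ([:-a,1:] ^ i)) = \<mu> [:c:] + gscale i \<gamma>" if "c \<noteq> 0" for c i
    using kv_mult[OF kv, of "[:c:]" "[:-a,1:]^i"] kv_power[OF kv, of "[:-a,1:]" i] that g by simp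
  define S where "S = {\<mu> (qexp_coeff [:-a,1:] F i * [:-a,1:] ^ i) | i. i \<le> degree F \<and> qexp_coeff [:-a,1:] F i \<noteq> 0}"
  have S1: "y \<in> {\<mu> [:coeff P i:] + gscale i \<gamma> | i. i \<le> degree F \<and> coeff P i \<noteq> 0}" if yS: "y \<in> S" for y
  proof -
    obtain i where i: "y = \<mu> (smult (coeff P i) ([:-a,1:] ^ i))" "i \<le> degree F" "coeff P i \<noteq> 0"
      using yS unfolding S_def qexp_X P_def by auto
    then show ?thesis using val[OF i(3), of i] by auto
  qed
  have S2: "y \<in> S" if yR: "y \<in> {\<mu> [:coeff P i:] + gscale i \<gamma> | i. i \<le> degree F \<and> coeff P i \<noteq> 0}" for y
  proof -
    obtain i where i: "y = \<mu> [:coeff P i:] + gscale i \<gamma>" "i \<le> degree F" "coeff P i \<noteq> 0"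
      using yR by auto
    then have "y = \<mu> (smult (coeff P i) ([:-a,1:] ^ i))" using val[OF i(3), of i] by simp
    then show ?thesis unfolding S_def qexp_X P_def using i(2,3) P_def by auto
  qed
  have S: "S = {\<mu> [:coeff P i:] + gscale i \<gamma> | i. i \<le> degree F \<and> coeff P i \<noteq> 0}" using S1 S2 by blast
  have fin: "finite S" unfolding S
    by (rule finite_subset[of _ "(\<lambda>i. \<mu> [:coeff P i:] + gscale i \<gamma>) ` {..degree F}"]) auto
  have kle: "k \<le> degree F" using ck degP le_degree P_def by metis
  have "Min S = t"
  proof (rule Min_eqI[OF fin])
    show "t \<in> S" unfolding S using kle ck ek P_def by auto
    fix y assume "y \<in> S"
    then obtain i where i: "y = \<mu> [:coeff P i:] + gscale i \<gamma>" "coeff P i \<noteq> 0" unfolding S by auto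
    then have "t - gscale i \<gamma> \<le> \<mu> [:coeff P i:]" using ge[of i] P_def by (simp add: geqv_def)
    then show "t \<le> y" using i(1) by (simp add: diff_le_eq)
  qed
  then show ?thesis unfolding trunc_val_def S_def .
qed

abbreviation M :: "'a::field poly \<Rightarrow> 'a alg_closure poly" where "M \<equiv> map_poly to_ac"

lemma M_add: "M (p + q) = M p + M q"
  by (rule poly_eqI) (simp add: coeff_map_poly)
lemma M_mult: "M (p * q) = M p * M q"
  by (rule poly_eqI) (simp add: coeff_map_poly coeff_mult to_ac_sum)
lemma M_one: "M 1 = 1" by simp
lemma M_power: "M (p ^ n) = M p ^ n"
  by (induction n) (simp_all add: M_mult)
lemma M_sum: "M (sum f A) = (\<Sum>i\<in>A. M (f i))"
  by (induction A rule: infinite_finite_induct) (simp_all add: M_add)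
lemma M_eq0: "M p = 0 \<longleftrightarrow> p = 0"
  by (rule map_poly_eq_0_iff) auto
lemma M_degree: "degree (M p) = degree p"
  by (rule degree_map_poly) simp




lemma pcompose_power: "pcompose (p ^ n) q = (pcompose p q) ^ n"
  by (induction n) (simp_all add: pcompose_mult pcompose_1)

lemma eps_part:
  fixes \<nu> :: "'k::field poly \<Rightarrow> 'g::linordered_ab_group_add"
    and \<mu> :: "'k alg_closure poly \<Rightarrow> 'g"
    and Q :: "'k poly" and a :: "'k alg_closure"
  assumes kvn: "krull_valuation \<nu>" and kvm: "krull_valuation \<mu>"
    and ext: "\<forall>f. f \<noteq> 0 \<longrightarrow> \<mu> (map_poly to_ac f) = \<nu> f"
    and key: "key_poly \<nu> Q" and opt: "optimizing_root \<mu> Q a"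
    and f0: "f \<noteq> 0" and df: "degree f < degree Q"
  shows "\<forall>c. poly (M f) c = 0 \<longrightarrow> \<mu> [:-c,1:] < \<mu> [:-a,1:]"
proof (rule ccontr)
  define \<gamma> where "\<gamma> = \<mu> [:-a,1:]"
  assume "\<not> ?thesis"
  then obtain c0 where c0: "poly (M f) c0 = 0" "\<gamma> \<le> \<mu> [:-c0,1:]" unfolding \<gamma>_def by auto
  have degQ: "degree Q > 0" using opt unfolding optimizing_root_def by simp
  have Mf0: "M f \<noteq> 0" using f0 M_eq0 by auto
  have degf: "degree f > 0"
  proof (rule ccontr)
    assume "\<not> degree f > 0"
    then obtain x where "f = [:x:]" by (metis degree_eq_zeroE neq0_conv)
    moreover have "M [:x:] = [:to_ac x:]" by (rule poly_eqI) (simp add: coeff_map_poly coeff_pCons split: nat.split)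
    ultimately show False using c0(1) f0 by simp
  qed
  define R where "R = {c. poly (M f) c = 0}"
  have finR: "finite R" unfolding R_def using poly_roots_finite[OF Mf0] .
  have c0R: "c0 \<in> R" unfolding R_def using c0 by simp
  define \<delta> where "\<delta> = Max ((\<lambda>c. \<mu> [:-c,1:]) ` R)"
  have rd: "\<mu> [:-c,1:] \<le> \<delta>" if "poly (M f) c = 0" for c
    unfolding \<delta>_def using finR that R_def by (intro Max_ge) auto
  have "\<delta> \<in> (\<lambda>c. \<mu> [:-c,1:]) ` R" unfolding \<delta>_def using finR c0R by (intro Max_in) auto
  then obtain c1 where c1: "poly (M f) c1 = 0" "\<mu> [:-c1,1:] = \<delta>" unfolding R_def by auto
  have gd: "\<gamma> \<le> \<delta>" using c0 rd[OF c0(1)] by simp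
  obtain m where m: "hasse_deriv m (M f) \<noteq> 0" "\<mu> (hasse_deriv m (M f)) = \<mu> (M f) - gscale m \<delta>"
    "m = 0 \<longrightarrow> (\<forall>c. poly (M f) c = 0 \<longrightarrow> \<mu> [:-c,1:] < \<delta>)"
    using hasse_val[OF kvm Mf0 rd] by blast
  have m0: "m \<noteq> 0" using m(3) c1 by auto
  have "\<not> degree (M f) < m" using m(1) hasse_high by blast
  then have mdeg: "m \<le> degree f" unfolding M_degree by simp
  have "M (hasse_deriv m f) \<noteq> 0" using m(1) by (simp add: map_hasse)
  then have hf: "hasse_deriv m f \<noteq> 0" by auto
  have vf: "\<nu> f - \<nu> (hasse_deriv m f) = gscale m \<delta>"
  proof -
    have "\<nu> (hasse_deriv m f) = \<mu> (M (hasse_deriv m f))" using ext hf by simp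
    then have "\<nu> (hasse_deriv m f) = \<mu> (hasse_deriv m (M f))" by (simp add: map_hasse)
    moreover have "\<nu> f = \<mu> (M f)" using ext f0 by simp
    ultimately show ?thesis using m(2) by (simp add: algebra_simps)
  qed
  have Q0: "Q \<noteq> 0" using degQ by auto
  then have MQ0: "M Q \<noteq> 0" using M_eq0 by auto
  have rQ: "\<mu> [:-c,1:] \<le> \<gamma>" if "poly (M Q) c = 0" for c
    using opt that unfolding optimizing_root_def \<gamma>_def by blast
  obtain mq where mq: "\<forall>b. geqv \<mu> (hasse_deriv b (M Q)) (\<mu> (M Q) - gscale b \<gamma>)"
    using hasse_val[OF kvm MQ0 rQ] by blast
  have "eps_ge \<nu> f Q"
    unfolding eps_ge_def
  proof -
    have "\<exists>b\<in>{1..degree f}. hasse_deriv b f \<noteq> 0 \<and>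
              (\<forall>c\<in>{1..degree Q}. hasse_deriv c Q \<noteq> 0 \<longrightarrow>
                  gscale b (\<nu> Q - \<nu> (hasse_deriv c Q)) \<le> gscale c (\<nu> f - \<nu> (hasse_deriv b f)))"
    proof (intro bexI[of _ m] conjI ballI impI)
      show "m \<in> {1..degree f}" using m0 mdeg by auto
      show "hasse_deriv m f \<noteq> 0" by (rule hf)
      fix c assume "c \<in> {1..degree Q}" "hasse_deriv c Q \<noteq> 0"
      then have "M (hasse_deriv c Q) \<noteq> 0" using M_eq0 by auto
      then have hq: "hasse_deriv c (M Q) \<noteq> 0" by (simp add: map_hasse)
      have "\<nu> (hasse_deriv c Q) = \<mu> (M (hasse_deriv c Q))"
        using ext \<open>hasse_deriv c Q \<noteq> 0\<close> by simp
      then have e1: "\<nu> (hasse_deriv c Q) = \<mu> (hasse_deriv c (M Q))" by (simp add: map_hasse)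
      have e2: "\<nu> Q = \<mu> (M Q)" using ext Q0 by simp
      have "\<mu> (M Q) - gscale c \<gamma> \<le> \<mu> (hasse_deriv c (M Q))"
        using mq hq unfolding geqv_def by blast
      then have qb: "\<nu> Q - \<nu> (hasse_deriv c Q) \<le> gscale c \<gamma>"
        unfolding e1 e2 by (simp add: diff_le_eq le_diff_eq add.commute)
      have "gscale m (\<nu> Q - \<nu> (hasse_deriv c Q)) \<le> gscale m (gscale c \<gamma>)"
        by (rule gscale_mono[OF qb])
      also have "\<dots> = gscale c (gscale m \<gamma>)" by (rule gscale_comm)
      also have "\<dots> \<le> gscale c (gscale m \<delta>)" by (intro gscale_mono gd)
      finally show "gscale m (\<nu> Q - \<nu> (hasse_deriv c Q)) \<le> gscale c (\<nu> f - \<nu> (hasse_deriv m f))"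
        using vf by simp
    qed
    then show "if degree Q = 0 then True else if degree f = 0 then False else
      (\<exists>b\<in>{1..degree f}. hasse_deriv b f \<noteq> 0 \<and>
              (\<forall>c\<in>{1..degree Q}. hasse_deriv c Q \<noteq> 0 \<longrightarrow>
                  gscale b (\<nu> Q - \<nu> (hasse_deriv c Q)) \<le> gscale c (\<nu> f - \<nu> (hasse_deriv b f))))"
      using degQ degf by simp
  qed
  then have "degree Q \<le> degree f" using key f0 unfolding key_poly_def by blast
  with df show False by simp
qed




theorem theorem3p1:
  fixes \<nu> :: "'k::field poly \<Rightarrow> 'g::linordered_ab_group_add"
    and \<mu> :: "'k alg_closure poly \<Rightarrow> 'g"
    and Q :: "'k poly" and a :: "'k alg_closure"
  assumes "krull_valuation \<nu>"
    and "krull_valuation \<mu>"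
    and "\<forall>f. f \<noteq> 0 \<longrightarrow> \<mu> (map_poly to_ac f) = \<nu> f"
    and "key_poly \<nu> Q"
    and "optimizing_root \<mu> Q a"
  shows "\<forall>f. f \<noteq> 0 \<longrightarrow> trunc_val \<mu> [:-a, 1:] (map_poly to_ac f) = trunc_val \<nu> Q f"
proof (intro allI impI)
  note kvn = assms(1) and kvm = assms(2) and ext = assms(3) and key = assms(4) and opt = assms(5)
  fix f :: "'k poly" assume f0: "f \<noteq> 0"
  define \<gamma> where "\<gamma> = \<mu> [:-a,1:]"
  define w where "w = (\<lambda>x. \<mu> [:x:])"
  have kw: "krull_valuation w" unfolding w_def by (rule kv_const[OF kvm])
  have degQ: "degree Q > 0" using opt unfolding optimizing_root_def by simp
  have Q0: "Q \<noteq> 0" using degQ by auto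
  have MQ0: "M Q \<noteq> 0" using Q0 M_eq0 by auto
  define N where "N = Suc (degree f)"
  define fi where "fi = (\<lambda>i. qexp_coeff Q f i)"
  have fexp: "f = (\<Sum>i<N. fi i * Q ^ i)" unfolding N_def fi_def by (rule qexp_expand[OF degQ])
  have dfi: "degree (fi i) < degree Q" if "fi i \<noteq> 0" for i
    using that degree_mod_less'[OF Q0] unfolding fi_def qexp_coeff_def by blast
  define PQ where "PQ = pcompose (M Q) [:a,1:]"
  have rQ: "\<mu> [:-c,1:] \<le> \<gamma>" if "poly (M Q) c = 0" for c
    using opt that unfolding optimizing_root_def \<gamma>_def by blast
  obtain mQ where mQ: "lead \<mu> \<gamma> PQ (\<mu> (M Q)) mQ"
    "mQ = 0 \<longleftrightarrow> (\<forall>c. poly (M Q) c = 0 \<longrightarrow> \<mu> [:-c,1:] < \<gamma>)"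
    using lead_roots[OF kvm \<gamma>_def MQ0 rQ] unfolding PQ_def by blast
  have aroot: "poly (M Q) a = 0" using opt unfolding optimizing_root_def by simp
  have mQ0: "mQ > 0" using mQ(2) aroot unfolding \<gamma>_def by auto
  define T where "T = (\<lambda>i. pcompose (M (fi i * Q ^ i)) [:a,1:])"
  define val where "val = (\<lambda>i. \<nu> (fi i * Q ^ i))"
  have leadT: "lead \<mu> \<gamma> (T i) (val i) (i * mQ)" if fi0: "fi i \<noteq> 0" for i
  proof -
    have Mfi0: "M (fi i) \<noteq> 0" using fi0 M_eq0 by auto
    have rs: "\<forall>c. poly (M (fi i)) c = 0 \<longrightarrow> \<mu> [:-c,1:] < \<gamma>"
      using eps_part[OF kvn kvm ext key opt fi0 dfi[OF fi0]] unfolding \<gamma>_def .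
    then have rs': "\<mu> [:-c,1:] \<le> \<gamma>" if "poly (M (fi i)) c = 0" for c using that by fastforce
    obtain k where k: "lead \<mu> \<gamma> (pcompose (M (fi i)) [:a,1:]) (\<mu> (M (fi i))) k"
      "k = 0 \<longleftrightarrow> (\<forall>c. poly (M (fi i)) c = 0 \<longrightarrow> \<mu> [:-c,1:] < \<gamma>)"
      using lead_roots[OF kvm \<gamma>_def Mfi0 rs'] by blast
    have k0: "k = 0" using k(2) rs by simp
    have l: "lead \<mu> \<gamma> (pcompose (M (fi i)) [:a,1:] * PQ ^ i) (\<mu> (M (fi i)) + gscale i (\<mu> (M Q))) (k + i * mQ)"
      by (rule lead_mult[OF kvm k(1) lead_power[OF kvm mQ(1)]])
    have "T i = pcompose (M (fi i)) [:a,1:] * PQ ^ i"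
      unfolding T_def PQ_def by (simp add: M_mult M_power pcompose_mult pcompose_power)
    moreover have "val i = \<mu> (M (fi i)) + gscale i (\<mu> (M Q))"
    proof -
      have "val i = \<nu> (fi i) + \<nu> (Q ^ i)" unfolding val_def
        by (rule kv_mult[OF kvn fi0]) (use Q0 in simp)
      also have "\<nu> (Q ^ i) = gscale i (\<nu> Q)" by (rule kv_power[OF kvn Q0])
      finally show ?thesis using ext fi0 Q0 by simp
    qed
    ultimately show ?thesis using l k0 by simp
  qed
  have T0: "T i = 0" if "fi i = 0" for i unfolding T_def using that by simp
  define P where "P = pcompose (M f) [:a,1:]"
  have PT: "P = (\<Sum>i<N. T i)"
    unfolding P_def T_def by (subst fexp) (simp only: M_sum pcompose_sum)
  define I where "I = {i. i \<le> degree f \<and> fi i \<noteq> 0}"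
  have finI: "finite I" unfolding I_def by simp
  have IN: "i \<in> I \<longleftrightarrow> i < N \<and> fi i \<noteq> 0" for i unfolding I_def N_def by auto
  have Ine: "I \<noteq> {}"
  proof
    assume "I = {}"
    then have "\<forall>i<N. fi i = 0" using IN by blast
    then have "f = 0" by (subst fexp) simp
    with f0 show False by simp
  qed
  define V where "V = {\<nu> (qexp_coeff Q f i * Q ^ i) | i. i \<le> degree f \<and> qexp_coeff Q f i \<noteq> 0}"
  have V: "V = val ` I" unfolding V_def val_def I_def fi_def by auto
  define t where "t = Min V"
  have tr: "trunc_val \<nu> Q f = t" unfolding trunc_val_def t_def V_def ..
  have finV: "finite V" unfolding V using finI by simp
  have tV: "t \<in> V" unfolding t_def using finV Ine V by (intro Min_in) auto
  have tle: "t \<le> val i" if "i \<in> I" for i unfolding t_def using finV that V by (intro Min_le) auto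
  define J where "J = {i \<in> I. val i = t}"
  have finJ: "finite J" unfolding J_def using finI by simp
  have Jne: "J \<noteq> {}" unfolding J_def using tV V by auto
  define iS where "iS = Max J"
  have isJ: "iS \<in> J" unfolding iS_def using finJ Jne by (rule Max_in)
  have isge: "i \<le> iS" if "i \<in> J" for i unfolding iS_def using finJ that by (rule Max_ge)
  define js where "js = iS * mQ"
  have geall: "geqv w (coeff P j) (t - gscale j \<gamma>)" for j
    unfolding PT coeff_sum
  proof (rule geqv_sum[OF kw])
    fix i assume "i \<in> {..<N}"
    show "geqv w (coeff (T i) j) (t - gscale j \<gamma>)"
    proof (cases "fi i = 0")
      case True then show ?thesis by (simp add: T0 geqv_def)
    next
      case False
      then have iI: "i \<in> I" using IN \<open>i \<in> {..<N}\<close> by auto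
      have "geqv w (coeff (T i) j) (val i - gscale j \<gamma>)"
        using leadT[OF False] unfolding lead_def w_def by blast
      moreover have "t - gscale j \<gamma> \<le> val i - gscale j \<gamma>" using tle[OF iI] by simp
      ultimately show ?thesis by (rule geqv_mono)
    qed
  qed
  have isI: "iS \<in> I" and vis: "val iS = t" using isJ unfolding J_def by auto
  have isN: "iS \<in> {..<N}" using isI IN by auto
  have fis: "fi iS \<noteq> 0" using isI IN by auto
  have lis: "lead \<mu> \<gamma> (T iS) t js" using leadT[OF fis] vis js_def by simp
  have c1: "coeff (T iS) js \<noteq> 0" and e1: "w (coeff (T iS) js) = t - gscale js \<gamma>"
    using lis unfolding lead_def w_def by (auto simp: eq_diff_eq)
  have rest: "gtv w (\<Sum>i\<in>{..<N} - {iS}. coeff (T i) js) (t - gscale js \<gamma>)"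
  proof (rule gtv_sum[OF kw])
    fix i assume iN: "i \<in> {..<N} - {iS}"
    show "gtv w (coeff (T i) js) (t - gscale js \<gamma>)"
    proof (cases "fi i = 0")
      case True then show ?thesis by (simp add: T0 gtv_def)
    next
      case False
      then have iI: "i \<in> I" using IN iN by auto
      note li = leadT[OF False]
      show ?thesis
      proof (cases "val i = t")
        case True
        then have "i \<in> J" using iI unfolding J_def by simp
        then have "i < iS" using isge iN by fastforce
        then have "i * mQ < js" unfolding js_def using mQ0 by simp
        then have "gtv w (coeff (T i) js) (val i - gscale js \<gamma>)"
          using li unfolding lead_def w_def by blast
        then show ?thesis using True by simp
      next
        case False
        then have lt: "t < val i" using tle[OF iI] by simp
        have "geqv w (coeff (T i) js) (val i - gscale js \<gamma>)"
          using li unfolding lead_def w_def by blast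
        moreover have "t - gscale js \<gamma> < val i - gscale js \<gamma>" using lt by simp
        ultimately show ?thesis by (rule geqv_gtv)
      qed
    qed
  qed
  have split: "coeff P js = coeff (T iS) js + (\<Sum>i\<in>{..<N} - {iS}. coeff (T i) js)"
    unfolding PT coeff_sum by (subst sum.remove[OF _ isN]) auto
  have ex: "coeff P js \<noteq> 0 \<and> w (coeff P js) = t - gscale js \<gamma>"
    using gtv_exact[OF kw c1 e1 rest] split by simp
  have Mf0: "M f \<noteq> 0" using f0 M_eq0 by auto
  have "trunc_val \<mu> [:-a,1:] (M f) = t"
  proof (rule trunc_X[OF kvm \<gamma>_def Mf0])
    show "coeff (pcompose (M f) [:a,1:]) js \<noteq> 0" using ex P_def by simp
    show "\<mu> [:coeff (pcompose (M f) [:a,1:]) js:] + gscale js \<gamma> = t"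
      using ex P_def w_def by (simp add: eq_diff_eq)
    show "geqv (\<lambda>x. \<mu> [:x:]) (coeff (pcompose (M f) [:a,1:]) j) (t - gscale j \<gamma>)" for j
      using geall[of j] P_def w_def by simp
  qed
  then show "trunc_val \<mu> [:-a, 1:] (map_poly to_ac f) = trunc_val \<nu> Q f" using tr by simp
qed


end
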